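(* Define $f:[0,1]\to\mathbb{R}$ by $f(0)=0$ and, for each $n\in\mathbb{N}$ (with $\mathbb{N}=\{1,2,\dots\}$), $$f(t)=\begin{cases}\frac{1}{n+1}-(2n+1)\left(t-\frac{1}{n+1}\right), & t\in\left[\frac{1}{n+1},\frac{2}{2n+1}\right],\\ (2n+1)\left(t-\frac{2}{2n+1}\right), & t\in\left[\frac{2}{2n+1},\frac1n\right].\end{cases}$$ Then $f$ is well defined and continuous, $\sup\{|f(x)-f(y)|:x,y\in[0,1]\}=1$, and the function $\delta:[0,1)\to[0,\infty)$, $\delta(\epsilon)=\inf\{|x-y| : x,y\in[0,1],\ |f(x)-f(y)|\ge\epsilon\}$, satisfies, for every integer $n\ge 2$, $$\delta(1/n)=\frac{1}{n(2n+1)}<\frac{1}{n(2n-1)}\le\delta(\epsilon)\quad\text{for all }\epsilon\in(1/n,1).$$ In particular $\delta$ is discontinuous at each point $1/n$, $n\ge2$. *)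

theory Defs
  imports "HOL-Analysis.Analysis"
begin

text \<open>For t in (0,1] we pick
  n = floor(1/t), so that t lies in [1/(n+1), 1/n], and use the paper's formula
  for that n. That the paper's clauses are consistent (well-definedness) is
  part of the theorem, stated as: this function satisfies every clause.\<close>
definition zigzag :: "real \<Rightarrow> real" where
  "zigzag t = (if t \<le> 0 then 0 else
     (let n = real (nat \<lfloor>1 / t\<rfloor>) in
        if t \<le> 2 / (2*n+1) then 1/(n+1) - (2*n+1) * (t - 1/(n+1))
        else (2*n+1) * (t - 2/(2*n+1))))"

definition zdelta :: "real \<Rightarrow> real" where
  "zdelta \<epsilon> = Inf {\<bar>x - y\<bar> | x y. x \<in> {0..1} \<and> y \<in> {0..1} \<and> \<bar>zigzag x - zigzag y\<bar> \<ge> \<epsilon>}"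

end

theory Submission
  imports Defs
begin

lemma zz_abs:
  assumes "t > 0"
  shows "zigzag t = \<bar>(2*real (nat \<lfloor>1/t\<rfloor>)+1)*t - 2\<bar>"
proof -
  define m where "m = real (nat \<lfloor>1/t\<rfloor>)"
  have m0: "m \<ge> 0" by (simp add: m_def)
  have e: "1/(m+1) - (2*m+1) * (t - 1/(m+1)) = 2 - (2*m+1)*t"
    using m0 by (simp add: field_simps)
  show ?thesis
  proof (cases "t \<le> 2/(2*m+1)")
    case True
    then have "(2*m+1)*t \<le> 2" using m0 by (simp add: field_simps)
    then show ?thesis unfolding zigzag_def Let_def m_def[symmetric] using assms e True by auto
  next
    case False
    then have "(2*m+1)*t > 2" using m0 by (simp add: field_simps)
    moreover have "(2*m+1) * (t - 2/(2*m+1)) = (2*m+1)*t - 2" using m0 by (simp add: field_simps)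
    ultimately show ?thesis unfolding zigzag_def Let_def m_def[symmetric] using assms False by auto
  qed
qed

lemma floor_bounds:
  assumes "t > 0"
  shows "real (nat \<lfloor>1/t\<rfloor>) \<le> 1/t" "1/t < real (nat \<lfloor>1/t\<rfloor>) + 1"
proof -
  have "\<lfloor>1/t\<rfloor> \<ge> 0" using assms by simp
  then have r: "real (nat \<lfloor>1/t\<rfloor>) = of_int \<lfloor>1/t\<rfloor>" by simp
  show "real (nat \<lfloor>1/t\<rfloor>) \<le> 1/t" unfolding r by (rule of_int_floor_le)
  show "1/t < real (nat \<lfloor>1/t\<rfloor>) + 1" unfolding r by (rule real_of_int_floor_add_one_gt)
qed

lemma tent:
  assumes k: "k \<ge> 1" and t1: "1/(real k+1) \<le> t" and t2: "t \<le> 1/real k"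
  shows "zigzag t = \<bar>(2*real k+1)*t - 2\<bar>"
proof -
  have tp: "t > 0" using t1 by (smt (verit) divide_pos_pos of_nat_0_le_iff)
  define m where "m = nat \<lfloor>1/t\<rfloor>"
  have b1: "real m \<le> 1/t" and b2: "1/t < real m + 1" using floor_bounds[OF tp] by (auto simp: m_def)
  have kt: "real k \<le> 1/t" using t2 k tp by (simp add: field_simps)
  have tk: "1/t \<le> real k + 1" using t1 tp by (simp add: field_simps)
  have "real k < real m + 1" using kt b2 by linarith
  then have "k \<le> m" by simp
  moreover have "real m < real k + 2" using b1 tk by linarith
  then have "m \<le> k + 1" by simp
  ultimately have "m = k \<or> m = k+1" by auto
  then show ?thesis
  proof
    assume "m = k" then show ?thesis using zz_abs[OF tp] by (simp add: m_def)
  next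
    assume mk: "m = k+1"
    then have "1/t = real k + 1" using b1 tk by simp
    then have tt: "t = 1/(real k+1)" using tp by (simp add: field_simps)
    have "zigzag t = \<bar>(2*(real k+1)+1)*t - 2\<bar>" using zz_abs[OF tp] mk by (simp add: m_def)
    also have "\<dots> = \<bar>(2*real k+1)*t - 2\<bar>" unfolding tt by (simp add: field_simps abs_if)
    finally show ?thesis .
  qed
qed

lemma tent_lip:
  assumes k: "k \<ge> 1" and "1/(real k+1) \<le> a" "a \<le> b" "b \<le> 1/real k"
  shows "\<bar>zigzag a - zigzag b\<bar> \<le> (2*real k+1)*(b-a)"
proof -
  have "zigzag a = \<bar>(2*real k+1)*a - 2\<bar>" "zigzag b = \<bar>(2*real k+1)*b - 2\<bar>"
    using tent[OF k] assms by auto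
  moreover have "(2*real k+1)*b - (2*real k+1)*a = (2*real k+1)*(b-a)" by (simp add: algebra_simps)
  moreover have "(2*real k+1)*(b-a) \<ge> 0" using assms by simp
  ultimately show ?thesis by (smt (verit))
qed

lemma lip:
  assumes "n \<ge> 1"
  shows "\<forall>a b. 1/(real n+1) \<le> a \<longrightarrow> a \<le> b \<longrightarrow> b \<le> 1 \<longrightarrow>
     \<bar>zigzag a - zigzag b\<bar> \<le> (2*real n+1)*(b-a)"
  using assms
proof (induction n rule: dec_induct)
  case base
  show ?case using tent_lip[of 1] by simp
next
  case (step n)
  show ?case
  proof (intro allI impI)
    fix a b :: real
    assume a: "1/(real (Suc n)+1) \<le> a" and ab: "a \<le> b" and b: "b \<le> 1"
    have np: "real n \<ge> 1" using step by simp
    have c: "1/(real n+1) \<le> 1/real n" using np by (simp add: field_simps)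
    show "\<bar>zigzag a - zigzag b\<bar> \<le> (2*real (Suc n)+1)*(b-a)"
    proof (cases "1/(real n+1) \<le> a")
      case True
      then have "\<bar>zigzag a - zigzag b\<bar> \<le> (2*real n+1)*(b-a)" using step.IH ab b by blast
      also have "\<dots> \<le> (2*real (Suc n)+1)*(b-a)" using ab by (intro mult_right_mono) auto
      finally show ?thesis .
    next
      case False
      show ?thesis
      proof (cases "b \<le> 1/(real n+1)")
        case True
        then show ?thesis using tent_lip[of "Suc n" a b] a ab by (simp add: add.commute)
      next
        case bF: False
        let ?c = "1/(real n+1)"
        have h1: "\<bar>zigzag a - zigzag ?c\<bar> \<le> (2*real (Suc n)+1)*(?c-a)"
          using tent_lip[of "Suc n" a ?c] a False by (simp add: add.commute)
        have h2: "\<bar>zigzag ?c - zigzag b\<bar> \<le> (2*real n+1)*(b-?c)"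
          using step.IH bF b by auto
        have h3: "(2*real n+1)*(b-?c) \<le> (2*real (Suc n)+1)*(b-?c)" using bF
          by (intro mult_right_mono) auto
        have "(2*real (Suc n)+1)*(?c-a) + (2*real (Suc n)+1)*(b-?c) = (2*real (Suc n)+1)*(b-a)"
          by (simp add: algebra_simps)
        then show ?thesis using h1 h2 h3 by linarith
      qed
    qed
  qed
qed

lemma lip2:
  assumes "n \<ge> 1" "1/(real n+1) \<le> a" "a \<le> 1" "1/(real n+1) \<le> b" "b \<le> 1"
  shows "\<bar>zigzag a - zigzag b\<bar> \<le> (2*real n+1)*\<bar>a-b\<bar>"
proof (cases "a \<le> b")
  case True then show ?thesis using lip[OF assms(1)] assms by auto
next
  case False then show ?thesis using lip[OF assms(1), rule_format, of b a] assms by (auto simp: abs_minus_commute)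
qed

lemma zz_nonneg: "zigzag t \<ge> 0"
  by (cases "t > 0") (auto simp: zz_abs, simp add: zigzag_def)

lemma zz_le:
  assumes "0 \<le> t" "t \<le> 1" shows "zigzag t \<le> t"
proof (cases "t = 0")
  case True then show ?thesis by (simp add: zigzag_def)
next
  case False
  then have tp: "t > 0" using assms by simp
  define k where "k = nat \<lfloor>1/t\<rfloor>"
  have b1: "real k \<le> 1/t" and b2: "1/t < real k + 1" using floor_bounds[OF tp] by (auto simp: k_def)
  have "1 \<le> 1/t" using assms tp by (simp add: field_simps)
  then have "real k \<ge> 1" using b2 by (simp add: k_def)
  have z: "zigzag t = \<bar>(2*real k+1)*t - 2\<bar>" using zz_abs[OF tp] by (simp add: k_def)
  have "real k * t \<le> 1" using b1 tp by (simp add: field_simps)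
  moreover have "1 < (real k + 1) * t" using b2 tp by (simp add: field_simps)
  ultimately show ?thesis unfolding z by (simp add: algebra_simps abs_if)
qed

lemma zz_inv: "real n \<ge> 1 \<Longrightarrow> zigzag (1/real n) = 1/real n"
  using tent[of n "1/real n"] by (simp add: field_simps abs_if)

lemma lowA:
  assumes n: "n \<ge> 1" and a: "0 \<le> a" "a \<le> 1" and b: "0 \<le> b" "b \<le> 1"
    and d: "zigzag a - zigzag b \<ge> 1/real n"
  shows "\<bar>a-b\<bar> \<ge> 1/(real n*(2*real n+1))"
proof -
  have np: "real n \<ge> 1" using n by simp
  have "a \<ge> 1/real n" using zz_le[OF a] zz_nonneg[of b] d by linarith
  show ?thesis
  proof (cases "b \<ge> 1/(real n+1)")
    case True
    have "1/(real n+1) \<le> 1/real n" using np by (simp add: field_simps)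
    then have "1/real n \<le> (2*real n+1)*\<bar>a-b\<bar>"
      using lip2[OF n, of a b] True a b d \<open>a \<ge> 1/real n\<close> by linarith
    moreover have "1/(real n*(2*real n+1)) = (1/real n)/(2*real n+1)" by simp
    ultimately show ?thesis using np by (simp only: pos_divide_le_eq) (simp add: mult.commute)
  next
    case False
    have e: "1/real n - 1/(real n+1) = 1/(real n*(real n+1))" using np by (simp add: field_simps)
    have "1/(real n*(2*real n+1)) \<le> 1/(real n*(real n+1))" using np
      by (intro divide_left_mono mult_left_mono) auto
    then show ?thesis using e False \<open>a \<ge> 1/real n\<close> by linarith
  qed
qed

lemma lowB:
  assumes m: "m \<ge> 1" and a: "0 \<le> a" "a \<le> 1" and b: "0 \<le> b" "b \<le> 1"
    and d: "zigzag a - zigzag b > 1/(real m+1)"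
  shows "\<bar>a-b\<bar> \<ge> 1/((real m+1)*(2*real m+1))"
proof -
  have mp: "real m \<ge> 1" using m by simp
  have ag: "a > 1/(real m+1)" using zz_le[OF a] zz_nonneg[of b] d by linarith
  show ?thesis
  proof (cases "b \<ge> 1/(real m+1)")
    case True
    then have "1/(real m+1) \<le> (2*real m+1)*\<bar>a-b\<bar>"
      using lip2[OF m, of a b] a b d ag by linarith
    moreover have "1/((real m+1)*(2*real m+1)) = (1/(real m+1))/(2*real m+1)" by simp
    ultimately show ?thesis using mp by (simp only: pos_divide_le_eq) (simp add: mult.commute)
  next
    case bF: False
    show ?thesis
    proof (cases "a \<ge> 1/real m")
      case True
      have e: "1/real m - 1/(real m+1) = 1/(real m*(real m+1))" using mp by (simp add: field_simps)
      have "1/((real m+1)*(2*real m+1)) \<le> 1/(real m*(real m+1))" using mp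
        by (intro divide_left_mono) (auto intro!: mult_mono)
      then show ?thesis using e bF True by linarith
    next
      case False
      then have z: "zigzag a = \<bar>(2*real m+1)*a - 2\<bar>" using tent[OF m, of a] ag by auto
      have za: "zigzag a > 1/(real m+1)" using d zz_nonneg[of b] by linarith
      have "\<not> (2 - (2*real m+1)*a > 1/(real m+1))"
      proof
        assume "2 - (2*real m+1)*a > 1/(real m+1)"
        then have "(2 - (2*real m+1)*a)*(real m+1) > 1" using mp by (simp add: field_simps)
        moreover have "a*(real m+1) > 1" using ag mp by (simp add: field_simps)
        then have "a*(real m+1)*(2*real m+1) > 1*(2*real m+1)" using mp
          by (intro mult_strict_right_mono) auto
        ultimately show False by (simp add: algebra_simps)
      qed
      then have "(2*real m+1)*a - 2 > 1/(real m+1)" using z za by (simp add: abs_if split: if_splits)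
      then have "((2*real m+1)*a - 2)*(real m+1) > 1" using mp by (simp add: field_simps)
      moreover have "(a - 1/(real m+1))*((real m+1)*(2*real m+1)) = ((2*real m+1)*a - 2)*(real m+1) + 1"
        using mp by (simp add: field_simps)
      ultimately have "(a - 1/(real m+1))*((real m+1)*(2*real m+1)) > 2" by linarith
      then have "a - 1/(real m+1) > 2/((real m+1)*(2*real m+1))" using mp
        by (subst pos_divide_less_eq) auto
      moreover have "2/((real m+1)*(2*real m+1)) \<ge> 1/((real m+1)*(2*real m+1))" using mp
        by (simp add: divide_right_mono)
      ultimately show ?thesis using bF by linarith
    qed
  qed
qed

lemma zz0: "zigzag 0 = 0" by (simp add: zigzag_def)

lemma zz_cont: "continuous_on {0..1} zigzag"
  unfolding continuous_on_iff
proof (intro ballI allI impI)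
  fix x e :: real
  assume x: "x \<in> {0..1}" and e: "e > 0"
  show "\<exists>d>0. \<forall>x'\<in>{0..1}. dist x' x < d \<longrightarrow> dist (zigzag x') (zigzag x) < e"
  proof (cases "x = 0")
    case True
    show ?thesis
    proof (intro exI[of _ e] conjI ballI impI)
      fix x' :: real assume "x' \<in> {0..1}" "dist x' x < e"
      then show "dist (zigzag x') (zigzag x) < e"
        using True zz_le[of x'] zz_nonneg[of x'] by (auto simp: dist_real_def zz0)
    qed (rule e)
  next
    case False
    then have xp: "x > 0" using x by auto
    obtain n :: nat where n: "2/x < real n" using reals_Archimedean2 by blast
    have n1: "n \<ge> 1" using n xp by (cases n) (auto simp: field_simps)
    have "1/(real n+1) < 1/real n" using n1 by (simp add: field_simps)
    also have "1/real n < x/2" using n xp n1 by (simp add: field_simps)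
    finally have nx: "1/(real n+1) < x/2" .
    define d where "d = min (x/2) (e/(2*real n+1))"
    have dp: "d > 0" using xp e by (simp add: d_def)
    show ?thesis
    proof (intro exI[of _ d] conjI ballI impI dp)
      fix x' :: real assume x': "x' \<in> {0..1}" and dx: "dist x' x < d"
      have "\<bar>x'-x\<bar> < x/2" using dx by (simp add: d_def dist_real_def)
      then have "x' > x/2" using abs_ge_minus_self[of "x'-x"] by linarith
      then have "\<bar>zigzag x' - zigzag x\<bar> \<le> (2*real n+1)*\<bar>x'-x\<bar>"
        using lip2[OF n1, of x' x] x x' nx by auto
      also have "\<dots> < (2*real n+1)*(e/(2*real n+1))" using dx
        by (intro mult_strict_left_mono) (auto simp: d_def dist_real_def)
      also have "\<dots> = e" by simp
      finally show "dist (zigzag x') (zigzag x) < e" by (simp add: dist_real_def)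
    qed
  qed
qed

lemma zz1: "zigzag 1 = 1" using zz_inv[of 1] by simp

lemma zz_sup: "Sup {\<bar>zigzag x - zigzag y\<bar> | x y. x \<in> {0..1} \<and> y \<in> {0..1}} = 1"
proof (rule cSup_eq_maximum)
  show "1 \<in> {\<bar>zigzag x - zigzag y\<bar> | x y. x \<in> {0..1} \<and> y \<in> {0..1}}"
    by (rule CollectI, rule exI[of _ 1], rule exI[of _ 0]) (simp add: zz0 zz1)
  fix z assume "z \<in> {\<bar>zigzag x - zigzag y\<bar> | x y. x \<in> {0..1} \<and> y \<in> {0..1}}"
  then obtain x y where z: "z = \<bar>zigzag x - zigzag y\<bar>" and xy: "x \<in> {0..1}" "y \<in> {0..1}" by blast
  show "z \<le> 1" unfolding z
    using xy zz_le[of x] zz_le[of y] zz_nonneg[of x] zz_nonneg[of y] by auto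
qed

lemma zd_ne: "\<epsilon> \<le> 1 \<Longrightarrow> (1::real) \<in> {\<bar>x - y\<bar> | x y. x \<in> {0..1} \<and> y \<in> {0..1} \<and> \<bar>zigzag x - zigzag y\<bar> \<ge> \<epsilon>}"
proof -
  assume "\<epsilon> \<le> 1"
  then have "\<bar>(1::real) - 0\<bar> = 1 \<and> (1::real) \<in> {0..1} \<and> (0::real) \<in> {0..1} \<and> \<bar>zigzag 1 - zigzag 0\<bar> \<ge> \<epsilon>"
    by (simp add: zz0 zz1)
  then show ?thesis by (intro CollectI exI[of _ 1] exI[of _ 0]) simp
qed

lemma zd_nonneg: "\<epsilon> \<le> 1 \<Longrightarrow> zdelta \<epsilon> \<ge> 0"
  unfolding zdelta_def
proof (rule cInf_greatest)
  assume "\<epsilon> \<le> 1"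
  then show "{\<bar>x - y\<bar> | x y. x \<in> {0..1} \<and> y \<in> {0..1} \<and> \<bar>zigzag x - zigzag y\<bar> \<ge> \<epsilon>} \<noteq> {}"
    using zd_ne by blast
qed auto

lemma zd_n:
  assumes n: "n \<ge> 1"
  shows "zdelta (1/real n) = 1/(real n*(2*real n+1))"
  unfolding zdelta_def
proof (rule cInf_eq_minimum)
  have np: "real n \<ge> 1" using n by simp
  have t: "2/(2*real n+1) \<in> {1/(real n+1)..1/real n}" using np by (auto simp: field_simps)
  have nz: "2*real n+1 \<noteq> 0" using np by simp
  have "(4*real n+2)/(2*real n+1) = 2" using nz by (simp add: divide_eq_eq)
  then have z2: "zigzag (2/(2*real n+1)) = 0" using tent[OF n, of "2/(2*real n+1)"] t by auto
  have z1: "zigzag (1/real n) = 1/real n" using zz_inv np by simp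
  have d: "\<bar>1/real n - 2/(2*real n+1)\<bar> = 1/(real n*(2*real n+1))"
    using np by (simp add: field_simps)
  have "1/real n \<le> 1" "2/(2*real n+1) \<le> 1" using np by (auto simp: field_simps)
  then show "1/(real n*(2*real n+1)) \<in> {\<bar>x - y\<bar> | x y. x \<in> {0..1} \<and> y \<in> {0..1} \<and> \<bar>zigzag x - zigzag y\<bar> \<ge> 1/real n}"
    using z1 z2 d np by (intro CollectI exI[of _ "1/real n"] exI[of _ "2/(2*real n+1)"]) auto
  fix z assume "z \<in> {\<bar>x - y\<bar> | x y. x \<in> {0..1} \<and> y \<in> {0..1} \<and> \<bar>zigzag x - zigzag y\<bar> \<ge> 1/real n}"
  then obtain x y where zz: "z = \<bar>x-y\<bar>" and x: "x \<in> {0..1}" and y: "y \<in> {0..1}" and h: "\<bar>zigzag x - zigzag y\<bar> \<ge> 1/real n" by blast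
  show "1/(real n*(2*real n+1)) \<le> z"
  proof -
    show "1/(real n*(2*real n+1)) \<le> z"
    proof (cases "zigzag x - zigzag y \<ge> 1/real n")
      case True then show ?thesis using lowA[OF n, of x y] x y zz by auto
    next
      case False
      then have "zigzag y - zigzag x \<ge> 1/real n" using h by auto
      then show ?thesis using lowA[OF n, of y x] x y zz by (auto simp: abs_minus_commute)
    qed
  qed
qed

lemma zd_gt:
  assumes n: "n \<ge> 2" and e: "1/real n < \<epsilon>" "\<epsilon> < 1"
  shows "1/(real n*(2*real n-1)) \<le> zdelta \<epsilon>"
  unfolding zdelta_def
proof (rule cInf_greatest)
  show "{\<bar>x - y\<bar> | x y. x \<in> {0..1} \<and> y \<in> {0..1} \<and> \<bar>zigzag x - zigzag y\<bar> \<ge> \<epsilon>} \<noteq> {}"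
    using zd_ne[of \<epsilon>] e by auto
  obtain m where m: "n = Suc m" "m \<ge> 1" using n by (cases n) auto
  have eq: "real n*(2*real n-1) = (real m+1)*(2*real m+1)" using m by (simp add: algebra_simps)
  have en: "1/(real m+1) < \<epsilon>" using e m by (simp add: add.commute)
  fix z assume "z \<in> {\<bar>x - y\<bar> | x y. x \<in> {0..1} \<and> y \<in> {0..1} \<and> \<bar>zigzag x - zigzag y\<bar> \<ge> \<epsilon>}"
  then obtain x y where z: "z = \<bar>x-y\<bar>" and x: "x \<in> {0..1}" and y: "y \<in> {0..1}" and h: "\<bar>zigzag x - zigzag y\<bar> \<ge> \<epsilon>" by blast
  show "1/(real n*(2*real n-1)) \<le> z"
  proof (cases "zigzag x - zigzag y \<ge> \<epsilon>")
    case True then show ?thesis using lowB[OF m(2), of x y] x y en z eq by auto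
  next
    case False
    then have "zigzag y - zigzag x \<ge> \<epsilon>" using h by auto
    then show ?thesis using lowB[OF m(2), of y x] x y en z eq by (auto simp: abs_minus_commute)
  qed
qed

lemma zd_disc:
  assumes n: "n \<ge> 2"
  shows "\<not> continuous (at (1/real n) within {0..<1}) zdelta"
proof
  assume c: "continuous (at (1/real n) within {0..<1}) zdelta"
  have np: "real n \<ge> 2" using n by simp
  have lt: "1/(real n*(2*real n+1)) < 1/(real n*(2*real n-1))" using np
    by (intro divide_strict_left_mono mult_strict_left_mono mult_pos_pos) auto
  have "(zdelta \<longlongrightarrow> zdelta (1/real n)) (at (1/real n) within {0..<1})"
    using c by (simp add: continuous_within)
  then have "eventually (\<lambda>e. zdelta e < 1/(real n*(2*real n-1))) (at (1/real n) within {0..<1})"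
    using lt zd_n[of n] n by (intro order_tendstoD(2)) auto
  then obtain d where d: "d > 0" and hd: "\<And>y. y \<in> {0..<1} \<Longrightarrow> y \<noteq> 1/real n \<Longrightarrow> dist y (1/real n) < d \<Longrightarrow> zdelta y < 1/(real n*(2*real n-1))"
    unfolding eventually_at by blast
  have n1: "1/real n < 1" using np by simp
  define y where "y = 1/real n + min (d/2) ((1 - 1/real n)/2)"
  have "min (d/2) ((1 - 1/real n)/2) \<le> (1 - 1/real n)/2" by (rule min.cobounded2)
  then have y1: "1/real n < y" "y < 1" using d n1 by (auto simp: y_def)
  have "y \<in> {0..<1}" using y1 np by auto (smt (verit) divide_nonneg_nonneg of_nat_0_le_iff)
  moreover have "dist y (1/real n) < d" using d n1 by (simp add: y_def dist_real_def)
  ultimately have "zdelta y < 1/(real n*(2*real n-1))" using hd y1 by auto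
  moreover have "1/(real n*(2*real n-1)) \<le> zdelta y" using zd_gt[OF n] y1 by auto
  ultimately show False by simp
qed


theorem mainTheorem5:
  shows "zigzag 0 = 0
    \<and> (\<forall>n::nat. n \<ge> 1 \<longrightarrow>
          (\<forall>t. 1/(real n+1) \<le> t \<and> t \<le> 2/(2*real n+1) \<longrightarrow>
               zigzag t = 1/(real n+1) - (2*real n+1) * (t - 1/(real n+1)))
        \<and> (\<forall>t. 2/(2*real n+1) \<le> t \<and> t \<le> 1/real n \<longrightarrow>
               zigzag t = (2*real n+1) * (t - 2/(2*real n+1))))
    \<and> continuous_on {0..1} zigzag
    \<and> Sup {\<bar>zigzag x - zigzag y\<bar> | x y. x \<in> {0..1} \<and> y \<in> {0..1}} = 1
    \<and> (\<forall>\<epsilon>\<in>{0..<1}. zdelta \<epsilon> \<ge> 0)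
    \<and> (\<forall>n::nat. n \<ge> 2 \<longrightarrow>
          zdelta (1/real n) = 1/(real n*(2*real n+1))
        \<and> 1/(real n*(2*real n+1)) < 1/(real n*(2*real n-1))
        \<and> (\<forall>\<epsilon>. 1/real n < \<epsilon> \<and> \<epsilon> < 1 \<longrightarrow> 1/(real n*(2*real n-1)) \<le> zdelta \<epsilon>)
        \<and> \<not> continuous (at (1/real n) within {0..<1}) zdelta)"
  proof (intro conjI allI impI ballI)
  show "zigzag 0 = 0" by (rule zz0)
  show "continuous_on {0..1} zigzag" by (rule zz_cont)
  show "Sup {\<bar>zigzag x - zigzag y\<bar> | x y. x \<in> {0..1} \<and> y \<in> {0..1}} = 1" by (rule zz_sup)
next
  fix n :: nat and t :: real
  assume n: "n \<ge> 1" and t: "1/(real n+1) \<le> t \<and> t \<le> 2/(2*real n+1)"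
  have np: "real n \<ge> 1" using n by simp
  have "2/(2*real n+1) \<le> 1/real n" using np by (simp add: field_simps)
  then have z: "zigzag t = \<bar>(2*real n+1)*t - 2\<bar>" using tent[OF n, of t] t by auto
  have "(2*real n+1)*t \<le> 2" using t np by (simp add: field_simps)
  moreover have "1/(real n+1) - (2*real n+1) * (t - 1/(real n+1)) = 2 - (2*real n+1)*t"
    using np by (simp add: field_simps)
  ultimately show "zigzag t = 1/(real n+1) - (2*real n+1) * (t - 1/(real n+1))" using z by simp
next
  fix n :: nat and t :: real
  assume n: "n \<ge> 1" and t: "2/(2*real n+1) \<le> t \<and> t \<le> 1/real n"
  have np: "real n \<ge> 1" using n by simp
  have "1/(real n+1) \<le> 2/(2*real n+1)" using np by (simp add: field_simps)
  then have z: "zigzag t = \<bar>(2*real n+1)*t - 2\<bar>" using tent[OF n, of t] t by auto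
  have "(2*real n+1)*t \<ge> 2" using t np by (simp add: field_simps)
  moreover have "(2*real n+1) * (t - 2/(2*real n+1)) = (2*real n+1)*t - 2"
    using np by (simp add: field_simps)
  ultimately show "zigzag t = (2*real n+1) * (t - 2/(2*real n+1))" using z by simp
next
  fix e :: real assume "e \<in> {0..<1}"
  then show "zdelta e \<ge> 0" using zd_nonneg by auto
next
  fix n :: nat assume n: "n \<ge> 2"
  show "zdelta (1/real n) = 1/(real n*(2*real n+1))" using zd_n n by auto
  have np: "real n \<ge> 2" using n by simp
  show "1/(real n*(2*real n+1)) < 1/(real n*(2*real n-1))" using np
    by (intro divide_strict_left_mono mult_strict_left_mono mult_pos_pos) auto
  show "\<not> continuous (at (1/real n) within {0..<1}) zdelta" by (rule zd_disc[OF n])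
next
  fix n :: nat and e :: real assume n: "n \<ge> 2" and e: "1/real n < e \<and> e < 1"
  then show "1/(real n*(2*real n-1)) \<le> zdelta e" using zd_gt[OF n] by auto
qed

end
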